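(* For all $(u_1,u_2)\in[0,1)^2$ and all integers $n\ge 0$, $$\big|\lfloor u_1\lfloor nu_2\rfloor\rfloor-\lfloor u_2\lfloor nu_1\rfloor\rfloor\big|\le 1.$$ *)

theory Defs
  imports Complex_Main
begin

end

theory Submission
  imports Defs
begin

lemma floor_close:
  fixes p q :: real
  assumes "\<bar>p - q\<bar> < 1"
  shows "\<bar>\<lfloor>p\<rfloor> - \<lfloor>q\<rfloor>\<bar> \<le> 1"
proof -
  have "of_int \<lfloor>p\<rfloor> \<le> p" "p < of_int \<lfloor>p\<rfloor> + 1"
       "of_int \<lfloor>q\<rfloor> \<le> q" "q < of_int \<lfloor>q\<rfloor> + 1" by linarith+
  moreover have "p - q < 1" "q - p < 1" using assms by linarith+
  ultimately have "\<lfloor>p\<rfloor> - \<lfloor>q\<rfloor> < 2" "\<lfloor>p\<rfloor> - \<lfloor>q\<rfloor> > -2" by linarith+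
  then show ?thesis by linarith
qed

theorem lemma2p2:
  fixes u1 u2 :: real and n :: nat
  assumes "0 \<le> u1" "u1 < 1" "0 \<le> u2" "u2 < 1"
  shows "\<bar>\<lfloor>u1 * of_int \<lfloor>real n * u2\<rfloor>\<rfloor> - \<lfloor>u2 * of_int \<lfloor>real n * u1\<rfloor>\<rfloor>\<bar> \<le> 1"
proof -
  define a where "a = real_of_int \<lfloor>real n * u2\<rfloor>"
  define b where "b = real_of_int \<lfloor>real n * u1\<rfloor>"
  define x where "x = real n * u1 * u2"
  have a: "real n * u2 - 1 < a" "a \<le> real n * u2" unfolding a_def by linarith+
  have b: "real n * u1 - 1 < b" "b \<le> real n * u1" unfolding b_def by linarith+
  have "u1 * a \<le> x" using a(2) assms(1) unfolding x_def
    by (metis mult.assoc mult.commute mult_left_mono)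
  moreover have "u1 * (real n * u2 - 1) \<le> u1 * a" using a(1) assms(1)
    by (simp add: mult_left_mono)
  moreover have "u2 * b \<le> x" using b(2) assms(3) unfolding x_def
    by (metis mult.assoc mult.commute mult_left_mono)
  moreover have "u2 * (real n * u1 - 1) \<le> u2 * b" using b(1) assms(3)
    by (simp add: mult_left_mono)
  ultimately have "\<bar>u1 * a - u2 * b\<bar> < 1" using assms unfolding x_def
    by (simp add: algebra_simps abs_if)
  then show ?thesis using floor_close unfolding a_def b_def by blast
qed

end
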